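(* Let $T\ge 0$ be the number of attacking rounds. If $T=0$, then the privacy leakage is $V_p=0$. Suppose $T>0$ and the assumptions in the context hold. Then $$V_p\ \ge\ \underline V_p:=1-\frac{c_b\Delta+c_bc_2T^{p-1}}{D},$$ and $V_p\le 1$; moreover, if $\Delta\ge\frac{2c_2c_b}{c_a}T^{p-1}$ or $\Delta\le\frac{c_ac_0}{2c_b}T^{p-1}$, then $$V_p\ \le\ \overline V_p:=1-\frac{c_a\Delta+c_ac_0T^{p-1}}{4D}.$$
   Context: A client has original private data $s_o$ and original gradient $w_o=g(s_o)$, where $g(s)=\partial\mathcal L(s,w)/\partial w$. The client releases a protected gradient $w_d$; let $s_d$ be data with $g(s_d)=w_d$, and let the protection extent be $\Delta=\|w_d-w_o\|=\|g(s_d)-g(s_o)\|$. A semi-honest attacker runs an optimization algorithm producing reconstructions $s_1,\dots,s_T$. Privacy leakage: $V_p=1-\frac1D\cdot\frac1T\sum_{t=1}^T\|s_t-s_o\|$ for $T>0$ and $V_p=0$ for $T=0$. Assumptions: constants $D,c_a,c_b,c_0,c_2>0$, $p\in(0,1)$; for all data $s_1,s_2$, $c_a\|g(s_1)-g(s_2)\|\le\|s_1-s_2\|\le c_b\|g(s_1)-g(s_2)\|$ (with $c_a\le c_b$); the regret bound $c_0T^p\le\sum_{t=1}^T\|g(s_t)-g(s_d)\|\le c_2T^p$ holds (with $c_0\le c_2$); $\|s_t-s_o\|\in[0,D]$ for all $t$; and $c_b+c_bc_2\le D$, $\frac{2c_2c_b}{c_a}\le D$. *)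

theory Defs
  imports "HOL-Analysis.Analysis"
begin

definition privacy_leakage :: "real \<Rightarrow> nat \<Rightarrow> (nat \<Rightarrow> 'a::real_normed_vector) \<Rightarrow> 'a \<Rightarrow> real" where
  "privacy_leakage D T s s_o =
     (if T = 0 then 0 else 1 - (1 / D) * (1 / real T) * (\<Sum>t=1..T. norm (s t - s_o)))"

end

theory Submission
  imports Defs
begin

theorem mainTheorem2:
  fixes g :: "'a::real_normed_vector \<Rightarrow> 'b::real_normed_vector"
    and s_o s_d :: 'a
    and s :: "nat \<Rightarrow> 'a"
    and T :: nat
    and D c_a c_b c_0 c_2 p \<Delta> :: real
  assumes pos: "D > 0" "c_a > 0" "c_b > 0" "c_0 > 0" "c_2 > 0"
    and p: "0 < p" "p < 1"
    and cab: "c_a \<le> c_b" and c02: "c_0 \<le> c_2"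
    and bilip: "\<And>s1 s2. c_a * norm (g s1 - g s2) \<le> norm (s1 - s2)
                         \<and> norm (s1 - s2) \<le> c_b * norm (g s1 - g s2)"
    and regret: "c_0 * real T powr p \<le> (\<Sum>t=1..T. norm (g (s t) - g s_d))"
                "(\<Sum>t=1..T. norm (g (s t) - g s_d)) \<le> c_2 * real T powr p"
    and bounded: "\<And>t. t \<in> {1..T} \<Longrightarrow> 0 \<le> norm (s t - s_o) \<and> norm (s t - s_o) \<le> D"
    and D1: "c_b + c_b * c_2 \<le> D"
    and D2: "2 * c_2 * c_b / c_a \<le> D"
    and Delta: "\<Delta> = norm (g s_d - g s_o)"
  shows "(T = 0 \<longrightarrow> privacy_leakage D T s s_o = 0)
       \<and> (T > 0 \<longrightarrow>
            privacy_leakage D T s s_o \<ge> 1 - (c_b * \<Delta> + c_b * c_2 * real T powr (p - 1)) / D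
          \<and> privacy_leakage D T s s_o \<le> 1
          \<and> ((\<Delta> \<ge> 2 * c_2 * c_b / c_a * real T powr (p - 1)
               \<or> \<Delta> \<le> c_a * c_0 / (2 * c_b) * real T powr (p - 1))
             \<longrightarrow> privacy_leakage D T s s_o \<le> 1 - (c_a * \<Delta> + c_a * c_0 * real T powr (p - 1)) / (4 * D)))"
proof -
  let ?S = "(\<Sum>t=1..T. norm (s t - s_o))"
  let ?G = "(\<Sum>t=1..T. norm (g (s t) - g s_d))"
  have part0: "T = 0 \<longrightarrow> privacy_leakage D T s s_o = 0" by (simp add: privacy_leakage_def)
  show ?thesis
  proof (intro conjI impI)
    show "T = 0 \<Longrightarrow> privacy_leakage D T s s_o = 0" using part0 by simp
  next
    assume T: "0 < T"
    define x where "x = real T powr (p - 1)"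
    have xd: "real T powr (p - 1) = x" by (simp add: x_def)
    have Tp: "real T powr p = real T * x" unfolding x_def using T
      by (simp add: powr_diff powr_one[of "real T"] field_simps)
    have x0: "x > 0" unfolding x_def using T by simp
    have V: "privacy_leakage D T s s_o = 1 - ?S / (D * real T)" using T
      by (simp add: privacy_leakage_def field_simps)
    have up1: "norm (s t - s_o) \<le> c_b * norm (g (s t) - g s_d) + c_b * \<Delta>" for t
    proof -
      have "norm (s t - s_o) \<le> c_b * norm (g (s t) - g s_o)" using bilip by blast
      also have "norm (g (s t) - g s_o) \<le> norm (g (s t) - g s_d) + \<Delta>"
        unfolding Delta using norm_triangle_ineq[of "g (s t) - g s_d" "g s_d - g s_o"] by simp
      finally show ?thesis using pos(3) by (simp add: algebra_simps)
    qed
    have lo1: "norm (s t - s_o) \<ge> c_a * \<Delta> - c_a * norm (g (s t) - g s_d)" for t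
    proof -
      have "c_a * norm (g (s t) - g s_o) \<le> norm (s t - s_o)" using bilip by blast
      moreover have "\<Delta> - norm (g (s t) - g s_d) \<le> norm (g (s t) - g s_o)"
        unfolding Delta using norm_triangle_ineq[of "g s_d - g (s t)" "g (s t) - g s_o"]
        by (simp add: norm_minus_commute)
      ultimately show ?thesis using pos(2) by (smt (verit) mult_left_mono right_diff_distrib)
    qed
    have lo2: "norm (s t - s_o) \<ge> c_a * norm (g (s t) - g s_d) - c_a * \<Delta>" for t
    proof -
      have "c_a * norm (g (s t) - g s_o) \<le> norm (s t - s_o)" using bilip by blast
      moreover have "norm (g (s t) - g s_d) - \<Delta> \<le> norm (g (s t) - g s_o)"
        unfolding Delta using norm_triangle_ineq[of "g (s t) - g s_o" "g s_o - g s_d"]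
        by (simp add: norm_minus_commute)
      ultimately show ?thesis using pos(2) by (smt (verit) mult_left_mono right_diff_distrib)
    qed
    have Sup: "?S \<le> c_b * ?G + real T * (c_b * \<Delta>)"
      using sum_mono[of "{1..T}", OF up1] by (simp add: sum.distrib sum_distrib_left)
    have Slo1: "?S \<ge> real T * (c_a * \<Delta>) - c_a * ?G"
      using sum_mono[of "{1..T}" "\<lambda>t. c_a * \<Delta> - c_a * norm (g (s t) - g s_d)", OF lo1]
      by (simp add: sum_subtractf sum_distrib_left)
    have Slo2: "?S \<ge> c_a * ?G - real T * (c_a * \<Delta>)"
      using sum_mono[of "{1..T}" "\<lambda>t. c_a * norm (g (s t) - g s_d) - c_a * \<Delta>", OF lo2]
      by (simp add: sum_subtractf sum_distrib_left)
    have S0: "?S \<ge> 0" by (simp add: sum_nonneg)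
    have DT: "D * real T > 0" using pos T by simp
    have d0: "\<Delta> \<ge> 0" using Delta by simp
    have G1: "?G \<le> c_2 * real T * x" "c_0 * real T * x \<le> ?G" using regret Tp by (auto simp: mult.assoc)
    show "privacy_leakage D T s s_o \<ge> 1 - (c_b * \<Delta> + c_b * c_2 * real T powr (p - 1)) / D"
    proof -
      have "?S \<le> (c_b * \<Delta> + c_b * c_2 * x) * real T"
        using Sup G1 pos(3) by (smt (verit) mult_left_mono mult.assoc mult.commute distrib_right)
      hence "?S / (D * real T) \<le> (c_b * \<Delta> + c_b * c_2 * x) / D" using DT pos T
        by (simp add: divide_simps mult.commute mult.left_commute)
      thus ?thesis using V xd by simp
    qed
    show "privacy_leakage D T s s_o \<le> 1" using V S0 DT by simp
    assume cases0: "2 * c_2 * c_b / c_a * real T powr (p - 1) \<le> \<Delta> \<or> \<Delta> \<le> c_a * c_0 / (2 * c_b) * real T powr (p - 1)"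
    hence cases: "2 * c_2 * c_b / c_a * x \<le> \<Delta> \<or> \<Delta> \<le> c_a * c_0 / (2 * c_b) * x" unfolding xd .
    have key: "?S \<ge> (c_a * \<Delta> + c_a * c_0 * x) / 4 * real T"
      using cases
    proof
      assume h: "2 * c_2 * c_b / c_a * x \<le> \<Delta>"
      have "2 * c_2 * c_b / c_a * x \<ge> 2 * c_2 * x"
        using pos cab x0 by (simp add: field_simps mult_left_mono mult_right_mono)
      hence h2: "\<Delta> \<ge> 2 * c_2 * x" using h by simp
      have "c_a * ?G \<le> c_a * (c_2 * real T * x)" using G1 pos by simp
      hence "?S \<ge> real T * (c_a * \<Delta>) - c_a * c_2 * real T * x" using Slo1 by (simp add: mult.assoc)
      moreover have "real T * (c_a * \<Delta>) - c_a * c_2 * real T * x \<ge> (c_a * \<Delta> + c_a * c_0 * x) / 4 * real T"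
      proof -
        have "c_0 * x \<le> c_2 * x" using c02 x0 by (simp add: mult_right_mono)
        hence "3 * \<Delta> \<ge> 4 * c_2 * x + c_0 * x" 
        proof -
          have "c_2 * x > 0" using pos x0 by simp
          thus ?thesis using h2 \<open>c_0 * x \<le> c_2 * x\<close> by linarith
        qed
        hence "c_a * real T * (3 * \<Delta>) \<ge> c_a * real T * (4 * c_2 * x + c_0 * x)"
          using pos T by (simp add: mult_left_mono)
        thus ?thesis by (simp add: field_simps)
      qed
      ultimately show ?thesis by linarith
    next
      assume h: "\<Delta> \<le> c_a * c_0 / (2 * c_b) * x"
      have "c_a * c_0 / (2 * c_b) * x \<le> c_0 / 2 * x"
        using pos cab x0 by (simp add: field_simps mult_left_mono mult_right_mono)
      hence h2: "\<Delta> \<le> c_0 / 2 * x" using h by linarith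
      have "c_a * ?G \<ge> c_a * (c_0 * real T * x)" using G1 pos by simp
      hence "?S \<ge> c_a * c_0 * real T * x - real T * (c_a * \<Delta>)" using Slo2 by (simp add: mult.assoc)
      moreover have "c_a * c_0 * real T * x - real T * (c_a * \<Delta>) \<ge> (c_a * \<Delta> + c_a * c_0 * x) / 4 * real T"
      proof -
        have "c_0 * x > 0" using x0 pos by simp
        hence "3 * c_0 * x \<ge> 5 * \<Delta>" using h2 by linarith
        hence "c_a * real T * (3 * c_0 * x) \<ge> c_a * real T * (5 * \<Delta>)"
          using pos T by (simp add: mult_left_mono)
        thus ?thesis by (simp add: field_simps)
      qed
      ultimately show ?thesis by linarith
    qed
    hence "?S / (D * real T) \<ge> (c_a * \<Delta> + c_a * c_0 * x) / (4 * D)" using DT pos T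
      by (simp add: divide_simps mult.commute mult.left_commute)
    thus "privacy_leakage D T s s_o \<le> 1 - (c_a * \<Delta> + c_a * c_0 * real T powr (p - 1)) / (4 * D)" using V xd by simp
  qed
qed

end
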